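(* Let $a_1>a_2>\cdots>a_n$ be real numbers in $[a,b]$ and $w_1,\dots,w_n$ real weights with \[ \sum_{i=1}^n w_i=\sum_{i=1}^n w_ia_i=\sum_{i=1}^n w_ia_i^2=0. \] For $1\le j\le n$ write $W_j=\sum_{i=1}^j w_i$, $M_j=\sum_{i=1}^j w_ia_i$, $Q_j=\sum_{i=1}^j w_ia_i^2$. Then $\sum_{i=1}^n w_if(a_i)\ge 0$ holds for every three times differentiable $f:[a,b]\to\mathbb{R}$ with $f'''\ge 0$ if and only if \[ W_jQ_j\ge M_j^2 \] for every $j\in\{1,\dots,n-1\}$ satisfying $W_j a_j\ge M_j\ge W_j a_{j+1}$. *)

theory Defs
  imports "HOL-Analysis.Analysis"
begin

definition thrice_diff_nonneg3 :: "real \<Rightarrow> real \<Rightarrow> (real \<Rightarrow> real) \<Rightarrow> bool" where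
  "thrice_diff_nonneg3 a b f \<longleftrightarrow>
     (\<exists>f1 f2 f3.
        (\<forall>x\<in>{a..b}. (f has_real_derivative f1 x) (at x within {a..b})) \<and>
        (\<forall>x\<in>{a..b}. (f1 has_real_derivative f2 x) (at x within {a..b})) \<and>
        (\<forall>x\<in>{a..b}. (f2 has_real_derivative f3 x) (at x within {a..b})) \<and>
        (\<forall>x\<in>{a..b}. f3 x \<ge> 0))"

end

theory Submission
  imports Defs
begin

lemma pp_deriv:
  fixes c y :: real and k :: nat
  assumes "k \<ge> 2"
  shows "((\<lambda>y. (max (y - c) 0)^k) has_real_derivative (of_nat k * (max (y-c) 0)^(k-1))) (at y)"
proof -
  have k1: "(0::real)^(k-1) = 0" using assms by simp
  have dg: "((\<lambda>y. (y - c)^k) has_real_derivative (of_nat k * (y-c)^(k-1))) (at y within S)" for S y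
    by (auto intro!: derivative_eq_intros)
  have d0: "((\<lambda>y. 0::real) has_real_derivative 0) (at y within S)" for S y by simp
  consider "y < c" | "y > c" | "y = c" by linarith
  then show ?thesis
  proof cases
    case 1
    have "((\<lambda>y. (max (y - c) 0)^k) has_real_derivative 0) (at y)"
      by (rule has_field_derivative_transform_within_open[OF d0[of y UNIV], of "{..<c}"])
         (use 1 k1 in auto)
    moreover have "max (y - c) 0 = 0" using 1 by simp
    ultimately show ?thesis by (simp only: k1 mult_zero_right)
  next
    case 2
    have "((\<lambda>y. (max (y - c) 0)^k) has_real_derivative (of_nat k * (y-c)^(k-1))) (at y)"
      by (rule has_field_derivative_transform_within_open[OF dg[of y UNIV], of "{c<..}"])
         (use 2 in auto)
    moreover have "max (y - c) 0 = y - c" using 2 by simp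
    ultimately show ?thesis by simp
  next
    case 3
    have L: "((\<lambda>y. (max (y - c) 0)^k) has_real_derivative 0) (at c within {..c})"
      by (rule has_field_derivative_transform_within[OF d0 zero_less_one]) (use assms in auto)
    have R: "((\<lambda>y. (max (y - c) 0)^k) has_real_derivative 0) (at c within {c..})"
    proof -
      have "((\<lambda>y. (y - c)^k) has_real_derivative 0) (at c within {c..})"
        using dg[of c "{c..}"] by (simp only: diff_self k1 mult_zero_right)
      then show ?thesis
        by (rule has_field_derivative_transform_within[OF _ zero_less_one]) auto
    qed
    have "((\<lambda>y. (max (y - c) 0)^k) has_real_derivative 0) (at c within ({..c} \<union> {c..}))"
      using L R unfolding has_field_derivative_iff by (rule Lim_Un)
    moreover have "{..c} \<union> {c..} = (UNIV::real set)" by auto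
    ultimately have "((\<lambda>y. (max (y - c) 0)^k) has_real_derivative 0) (at y)" using 3 by simp
    then show ?thesis using 3 by (simp only: diff_self max.idem k1 mult_zero_right)
  qed
qed

definition tri :: "real \<Rightarrow> real \<Rightarrow> nat \<Rightarrow> real \<Rightarrow> real" where
  "tri s h k y = (max (y-s) 0)^k - 2*(max (y-(s+h)) 0)^k + (max (y-(s+2*h)) 0)^k"

lemma tri_deriv:
  assumes "k \<ge> 2"
  shows "((tri s h k) has_real_derivative (real k * tri s h (k-1) y)) (at y)"
proof -
  have "((\<lambda>y. (max (y-s) 0)^k - 2*(max (y-(s+h)) 0)^k + (max (y-(s+2*h)) 0)^k) has_real_derivative
     (real k * (max (y-s) 0)^(k-1) - 2*(real k * (max (y-(s+h)) 0)^(k-1)) + real k * (max (y-(s+2*h)) 0)^(k-1))) (at y)"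
    by (intro DERIV_add DERIV_diff DERIV_cmult pp_deriv assms)
  then show ?thesis unfolding tri_def[abs_def] by (simp add: algebra_simps)
qed

lemma tri_nonneg: "h \<ge> 0 \<Longrightarrow> tri s h 1 y \<ge> 0"
  unfolding tri_def by (simp add: max_def)

lemma tri_low: "h \<ge> 0 \<Longrightarrow> y \<le> s \<Longrightarrow> tri s h k y = 0 \<or> k = 0"
  unfolding tri_def by (cases k) (auto simp: max_def)

lemma tri_high: "h \<ge> 0 \<Longrightarrow> y \<ge> s + 2*h \<Longrightarrow> tri s h 4 y = 12*h^2*(y-(s+h))^2 + 2*h^4"
  unfolding tri_def by (simp add: max_def power4_eq_xxxx power2_eq_square algebra_simps)

lemma sum_split_j:
  fixes F A :: "nat \<Rightarrow> real"
  assumes "j \<le> n" "\<And>i. 1\<le>i \<Longrightarrow> i\<le>j \<Longrightarrow> F i = A i" "\<And>i. j<i \<Longrightarrow> i\<le>n \<Longrightarrow> F i = 0"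
  shows "(\<Sum>i=1..n. F i) = (\<Sum>i=1..j. A i)"
proof -
  have "{1..n} = {1..j} \<union> {j+1..n}" using assms(1) by auto
  then have "(\<Sum>i=1..n. F i) = (\<Sum>i=1..j. F i) + (\<Sum>i=j+1..n. F i)"
    by (simp add: sum.union_disjoint)
  also have "(\<Sum>i=j+1..n. F i) = 0" using assms(3) by (intro sum.neutral) auto
  also have "(\<Sum>i=1..j. F i) = (\<Sum>i=1..j. A i)" using assms(2) by (intro sum.cong) auto
  finally show ?thesis by simp
qed


lemma tri_thrice: assumes "h \<ge> 0" shows "thrice_diff_nonneg3 a b (tri s h 4)"
  unfolding thrice_diff_nonneg3_def
proof (rule exI[of _ "\<lambda>y. 4 * tri s h 3 y"], rule exI[of _ "\<lambda>y. 12 * tri s h 2 y"],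
     rule exI[of _ "\<lambda>y. 24 * tri s h 1 y"], intro conjI ballI)
  fix y
  show "(tri s h 4 has_real_derivative 4 * tri s h 3 y) (at y within {a..b})"
    using tri_deriv[of 4 s h y] by (auto intro: has_field_derivative_at_within)
  have "((\<lambda>y. 4 * tri s h 3 y) has_real_derivative 4 * (3 * tri s h 2 y)) (at y)"
    using tri_deriv[of 3 s h y] by (intro DERIV_cmult) simp
  then have "((\<lambda>y. 4 * tri s h 3 y) has_real_derivative 12 * tri s h 2 y) (at y)" by simp
  then show "((\<lambda>y. 4 * tri s h 3 y) has_real_derivative 12 * tri s h 2 y) (at y within {a..b})"
    by (auto intro: has_field_derivative_at_within)
  have "((\<lambda>y. 12 * tri s h 2 y) has_real_derivative 12 * (2 * tri s h 1 y)) (at y)"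
    using tri_deriv[of 2 s h y] by (intro DERIV_cmult) simp
  then have "((\<lambda>y. 12 * tri s h 2 y) has_real_derivative 24 * tri s h 1 y) (at y)" by simp
  then show "((\<lambda>y. 12 * tri s h 2 y) has_real_derivative 24 * tri s h 1 y) (at y within {a..b})"
    by (auto intro: has_field_derivative_at_within)
  show "0 \<le> 24 * tri s h 1 y" using tri_nonneg[OF \<open>h \<ge> 0\<close>] by simp
qed


lemma sq_expand:
  fixes w x :: "nat \<Rightarrow> real"
  shows "(\<Sum>i=1..j. w i * (x i - u)^2) =
     (\<Sum>i=1..j. w i) * u^2 - 2 * u * (\<Sum>i=1..j. w i * x i) + (\<Sum>i=1..j. w i * (x i)^2)"
proof -
  have "(\<Sum>i=1..j. w i * (x i - u)^2) = (\<Sum>i=1..j. w i * u^2 - 2 * u * (w i * x i) + w i * (x i)^2)"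
    by (intro sum.cong) (auto simp: power2_eq_square algebra_simps)
  then show ?thesis
    by (simp add: sum.distrib sum_subtractf sum_distrib_left sum_distrib_right)
qed

lemma lemC:
  fixes x w :: "nat \<Rightarrow> real" and j n :: nat
  assumes decr: "\<And>i j. 1 \<le> i \<Longrightarrow> i < j \<Longrightarrow> j \<le> n \<Longrightarrow> x j < x i"
    and j: "1 \<le> j" "j < n"
    and c1: "(\<Sum>i=1..j. w i) * x j \<ge> (\<Sum>i=1..j. w i * x i)"
    and c2: "(\<Sum>i=1..j. w i * x i) \<ge> (\<Sum>i=1..j. w i) * x (j+1)"
    and bad: "(\<Sum>i=1..j. w i) * (\<Sum>i=1..j. w i * (x i)^2) < (\<Sum>i=1..j. w i * x i)^2"
  shows "\<exists>f. thrice_diff_nonneg3 a b f \<and> (\<Sum>i=1..n. w i * f (x i)) < 0"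
proof -
  define W where "W = (\<Sum>i=1..j. w i)"
  define M where "M = (\<Sum>i=1..j. w i * x i)"
  define Q where "Q = (\<Sum>i=1..j. w i * (x i)^2)"
  have xj: "x (j+1) < x j" using decr[of j "j+1"] j by auto
  have c1': "W * x j \<ge> M" and c2': "M \<ge> W * x (j+1)" and bad': "W * Q < M^2"
    using c1 c2 bad by (auto simp: W_def M_def Q_def)
  have Wpos: "W > 0"
  proof (rule ccontr)
    assume "\<not> W > 0"
    then consider "W = 0" | "W < 0" by linarith
    then show False
    proof cases
      case 1 then show ?thesis using c1' c2' bad' by simp
    next
      case 2
      have "W * x j < W * x (j+1)" using 2 xj by (simp add: mult_less_cancel_left)
      then show ?thesis using c1' c2' by linarith
    qed
  qed
  define t where "t = M / W"
  have t1: "x (j+1) \<le> t" using c2' Wpos by (simp add: t_def le_divide_eq mult.commute)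
  have t2: "t \<le> x j" using c1' Wpos by (simp add: t_def divide_le_eq mult.commute)
  define D where "D = Q - M^2 / W"
  have Dneg: "D < 0" using bad' Wpos by (simp add: D_def field_simps)
  have qform: "(\<Sum>i=1..j. w i * (x i - u)^2) = W * (u - t)^2 + D" for u
    unfolding sq_expand W_def[symmetric] M_def[symmetric] Q_def[symmetric] t_def D_def
    using Wpos by (simp add: field_simps power2_eq_square)
  define L where "L = x j - x (j+1)"
  have Lpos: "L > 0" using xj by (simp add: L_def)
  define \<rho> where "\<rho> = min (L/4) (sqrt (-D/(4*W)))"
  have rpos: "\<rho> > 0" using Lpos Dneg Wpos by (simp add: \<rho>_def divide_pos_pos divide_neg_pos)
  have rL: "\<rho> \<le> L/4" by (simp add: \<rho>_def)
  have "\<rho>^2 \<le> (sqrt (-D/(4*W)))^2"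
    using rpos by (intro power_mono) (auto simp: \<rho>_def)
  also have "\<dots> = -D/(4*W)" using Dneg Wpos by (simp add: divide_neg_pos less_imp_le)
  finally have "\<rho>^2 \<le> -D/(4*W)" .
  then have rW: "W * \<rho>^2 \<le> -D/4" using Wpos by (simp add: field_simps)
  define m where "m = max (x (j+1) + \<rho>) (min t (x j - \<rho>))"
  have mt: "(m - t)^2 \<le> \<rho>^2"
  proof -
    have "\<bar>m - t\<bar> \<le> \<rho>" using t1 t2 rL rpos by (simp add: m_def L_def max_def min_def)
    then show ?thesis by (metis abs_le_square_iff abs_of_pos rpos)
  qed
  have m1: "x (j+1) \<le> m - \<rho>" and m2: "m + \<rho> \<le> x j"
    using rL rpos by (auto simp: m_def L_def)
  define s where "s = m - \<rho>"
  have hi: "tri s \<rho> 4 (x i) = 12*\<rho>^2*(x i - m)^2 + 2*\<rho>^4" if "1 \<le> i" "i \<le> j" for i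
  proof -
    have "x j \<le> x i" using decr[of i j] that j by (cases "i = j") auto
    then show ?thesis using tri_high[of \<rho> s "x i"] rpos m2 by (simp add: s_def)
  qed
  have lo: "tri s \<rho> 4 (x i) = 0" if "j < i" "i \<le> n" for i
  proof -
    have "x i \<le> x (j+1)" using decr[of "j+1" i] that j by (cases "i = j+1") auto
    then show ?thesis using tri_low[of \<rho> "x i" s 4] rpos m1 by (simp add: s_def)
  qed
  have "(\<Sum>i=1..n. w i * tri s \<rho> 4 (x i)) = (\<Sum>i=1..j. w i * (12*\<rho>^2*(x i - m)^2 + 2*\<rho>^4))"
    using hi lo j by (intro sum_split_j) auto
  also have "\<dots> = 12*\<rho>^2 * (\<Sum>i=1..j. w i * (x i - m)^2) + 2*\<rho>^4 * W"
    by (simp add: W_def sum.distrib sum_distrib_left sum_distrib_right algebra_simps)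
  also have "\<dots> = 12*\<rho>^2 * (W * (m - t)^2 + D) + 2*\<rho>^4 * W" by (simp only: qform)
  also have "\<dots> \<le> 12*\<rho>^2 * (W * \<rho>^2 + D) + 2*\<rho>^4 * W"
    using mt Wpos rpos by (intro add_mono mult_left_mono) auto
  also have "\<dots> = \<rho>^2 * (14 * (W * \<rho>^2) + 12 * D)" by (simp add: algebra_simps power4_eq_xxxx power2_eq_square)
  also have "\<dots> < 0"
  proof -
    have "14 * (W * \<rho>^2) + 12 * D < 0" using rW Dneg by linarith
    then show ?thesis using rpos by (simp add: mult_pos_neg)
  qed
  finally have "(\<Sum>i=1..n. w i * tri s \<rho> 4 (x i)) < 0" .
  moreover have "thrice_diff_nonneg3 a b (tri s \<rho> 4)" using rpos by (intro tri_thrice) simp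
  ultimately show ?thesis by blast
qed


lemma pp_deriv2:
  fixes c t :: real
  shows "((\<lambda>t. (max (c - t) 0)^2) has_real_derivative (-2 * max (c - t) 0)) (at t)"
proof -
  have "((\<lambda>t. (max ((2*c - t) - c) 0)^2) has_real_derivative
      (real 2 * (max ((2*c-t)-c) 0)^(2-1)) * (-1)) (at t)"
    by (rule DERIV_chain2[OF pp_deriv]) (auto intro!: derivative_eq_intros)
  then show ?thesis by simp
qed


lemma lemA:
  fixes x w :: "nat \<Rightarrow> real" and n :: nat
  assumes decr: "\<And>i j. 1 \<le> i \<Longrightarrow> i < j \<Longrightarrow> j \<le> n \<Longrightarrow> x j < x i"
    and W0: "(\<Sum>i=1..n. w i) = 0"
    and M0: "(\<Sum>i=1..n. w i * x i) = 0"
    and Q0: "(\<Sum>i=1..n. w i * (x i)^2) = 0"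
    and cond: "\<forall>j\<in>{1..n-1}.
            (\<Sum>i=1..j. w i) * x j \<ge> (\<Sum>i=1..j. w i * x i) \<and>
            (\<Sum>i=1..j. w i * x i) \<ge> (\<Sum>i=1..j. w i) * x (j+1) \<longrightarrow>
            (\<Sum>i=1..j. w i) * (\<Sum>i=1..j. w i * (x i)^2) \<ge> (\<Sum>i=1..j. w i * x i)^2"
  shows "(\<Sum>i=1..n. w i * (max (x i - t1) 0)^2) \<ge> 0"
proof (rule ccontr)
  define G where "G t = (\<Sum>i=1..n. w i * (max (x i - t) 0)^2)" for t
  assume "\<not> ?thesis"
  then have t1: "G t1 < 0" by (simp add: G_def)
  have dG: "(G has_real_derivative (\<Sum>i=1..n. w i * (-2 * max (x i - t) 0))) (at t)" for t
    unfolding G_def[abs_def] by (intro DERIV_sum DERIV_cmult pp_deriv2)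
  have contG: "continuous_on S G" for S
    by (rule DERIV_continuous_on, rule has_field_derivative_at_within, rule dG)
  have n1: "n \<ge> 1"
  proof (rule ccontr)
    assume "\<not> n \<ge> 1" then have "n = 0" by simp
    then show False using t1 by (simp add: G_def)
  qed
  have xle: "x i \<le> x 1" if "1 \<le> i" "i \<le> n" for i using decr[of 1 i] that by (cases "i = 1") auto
  have xge: "x n \<le> x i" if "1 \<le> i" "i \<le> n" for i using decr[of i n] that by (cases "i = n") auto
  have Ghi: "G t = 0" if "x 1 \<le> t" for t
    unfolding G_def using xle that by (intro sum.neutral ballI) (force simp: max_def)
  have Glo: "G t = 0" if "t \<le> x n" for t
  proof -
    have "G t = (\<Sum>i=1..n. w i * (x i - t)^2)"
      unfolding G_def using xge that by (intro sum.cong refl) (force simp: max_def)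
    also have "\<dots> = 0" unfolding sq_expand W0 M0 Q0 by simp
    finally show ?thesis .
  qed
  define K where "K = {x n..x 1}"
  have "\<not> x 1 \<le> t1" "\<not> t1 \<le> x n" using t1 Ghi[of t1] Glo[of t1] by auto
  then have t1K: "t1 \<in> K" by (simp add: K_def)
  obtain t0' where t0'K: "t0' \<in> K" and t0'min: "\<forall>y\<in>K. G t0' \<le> G y"
    using continuous_attains_inf[of K G] t1K contG by (auto simp: K_def)
  define \<mu> where "\<mu> = G t0'"
  have mu_neg: "\<mu> < 0" using bspec[OF t0'min t1K] t1 by (simp add: \<mu>_def)
  have Gge: "G y \<ge> \<mu>" for y
  proof (cases "y \<in> K")
    case True then show ?thesis using t0'min by (simp add: \<mu>_def)
  next
    case False then have "x 1 \<le> y \<or> y \<le> x n" by (auto simp: K_def)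
    then have "G y = 0" using Ghi[of y] Glo[of y] by auto
    then show ?thesis using mu_neg by simp
  qed
  define Z where "Z = K \<inter> {t. G t \<le> \<mu>}"
  have "compact Z" unfolding Z_def K_def
    by (intro compact_Int_closed compact_Icc closed_Collect_le contG continuous_on_const)
  moreover have "t0' \<in> Z" using t0'K by (simp add: Z_def \<mu>_def)
  ultimately obtain t0 where t0Z: "t0 \<in> Z" and t0min: "\<forall>y\<in>Z. t0 \<le> y"
    using compact_attains_inf[of Z] by blast
  have Gt0: "G t0 = \<mu>" using t0Z Gge[of t0] by (simp add: Z_def)
  have t0K: "t0 \<in> K" using t0Z by (simp add: Z_def)
  have t0lo: "x n < t0"
  proof (rule ccontr)
    assume "\<not> x n < t0" then have "G t0 = 0" using Glo by simp
    then show False using Gt0 mu_neg by simp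
  qed
  define J where "J = {i\<in>{1..n}. t0 \<le> x i}"
  define j where "j = Max J"
  have "1 \<in> J" using t0K n1 by (simp add: J_def K_def)
  moreover have fJ: "finite J" by (simp add: J_def)
  ultimately have jJ: "j \<in> J" unfolding j_def by (intro Max_in) auto
  have jmax: "\<forall>i\<in>J. i \<le> j" unfolding j_def using fJ by simp
  have j1: "1 \<le> j" and jn: "j \<le> n" and t0j: "t0 \<le> x j" using jJ by (auto simp: J_def)
  have jn': "j < n" using jn t0j t0lo by (cases "j = n") auto
  have t0j1: "x (j+1) < t0"
  proof (rule ccontr)
    assume "\<not> x (j+1) < t0" then have "j + 1 \<in> J" using jn' by (simp add: J_def)
    then show False using jmax by fastforce
  qed
  define W where "W = (\<Sum>i=1..j. w i)"
  define M where "M = (\<Sum>i=1..j. w i * x i)"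
  define Q where "Q = (\<Sum>i=1..j. w i * (x i)^2)"
  have hi: "x j \<le> x i" if "1 \<le> i" "i \<le> j" for i using decr[of i j] that jn by (cases "i = j") auto
  have lo: "x i \<le> x (j+1)" if "j < i" "i \<le> n" for i using decr[of "j+1" i] that by (cases "i = j+1") auto
  have Gq: "G s = W * s^2 - 2 * s * M + Q" if "x (j+1) \<le> s" "s \<le> x j" for s
  proof -
    have "G s = (\<Sum>i=1..j. w i * (x i - s)^2)"
      unfolding G_def
    proof (rule sum_split_j[OF jn])
      fix i assume "1 \<le> i" "i \<le> j"
      then have "s \<le> x i" using hi[of i] that by linarith
      then show "w i * (max (x i - s) 0)^2 = w i * (x i - s)^2" by simp
    next
      fix i assume "j < i" "i \<le> n"
      then have "x i \<le> s" using lo[of i] that by linarith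
      then show "w i * (max (x i - s) 0)^2 = 0" by simp
    qed
    then show ?thesis using sq_expand[where w=w and x=x and j=j and u=s] by (simp add: W_def M_def Q_def)
  qed
  have "(\<Sum>i=1..n. w i * (-2 * max (x i - t0) 0)) = (\<Sum>i=1..j. w i * (-2 * (x i - t0)))"
  proof (rule sum_split_j[OF jn])
    fix i assume "1 \<le> i" "i \<le> j"
    then have "t0 \<le> x i" using hi[of i] t0j by linarith
    then show "w i * (-2 * max (x i - t0) 0) = w i * (-2 * (x i - t0))" by simp
  next
    fix i assume "j < i" "i \<le> n"
    then have "x i \<le> t0" using lo[of i] t0j1 by linarith
    then show "w i * (-2 * max (x i - t0) 0) = 0" by simp
  qed
  also have "\<dots> = (\<Sum>i=1..j. (-2) * (w i * x i) + (2*t0) * w i)"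
    by (intro sum.cong) (auto simp: algebra_simps)
  also have "\<dots> = -2 * M + 2*t0*W"
    by (simp only: M_def W_def sum.distrib sum_distrib_left)
  also have "\<dots> = -2 * (M - t0 * W)" by simp
  finally have "(G has_real_derivative (-2 * (M - t0 * W))) (at t0)" using dG[of t0] by simp
  then have "-2 * (M - t0 * W) = 0"
    by (rule DERIV_local_min[OF _ zero_less_one]) (use Gge Gt0 in auto)
  then have MW: "M = t0 * W" by simp
  consider "W > 0" | "W = 0" | "W < 0" by linarith
  then show False
  proof cases
    case 1
    have "W * x j \<ge> M" using t0j 1 MW by (simp add: mult.commute)
    moreover have "M \<ge> W * x (j+1)" using t0j1 1 MW by (simp add: mult.commute)
    ultimately have "W * Q \<ge> M^2" using cond j1 jn' by (auto simp: W_def M_def Q_def)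
    moreover have "W * G t0 = W * Q - M^2"
    proof -
      have "W * G t0 = W * (W * t0^2 - 2 * t0 * M + Q)" using Gq[of t0] t0j t0j1 by simp
      also have "\<dots> = W * Q - M^2" unfolding MW by (simp add: power2_eq_square algebra_simps)
      finally show ?thesis .
    qed
    ultimately have "W * G t0 \<ge> 0" by simp
    then have "G t0 \<ge> 0" using 1 by (simp add: zero_le_mult_iff)
    then show False using Gt0 mu_neg by simp
  next
    case 2
    then have "M = 0" using MW by simp
    then have "G (x (j+1)) = G t0" using Gq[of "x (j+1)"] Gq[of t0] t0j t0j1 2 by simp
    moreover have "x n \<le> x (j+1)" using xge[of "j+1"] jn' by simp
    moreover have "x (j+1) \<le> x 1" using xle[of "j+1"] jn' by simp
    ultimately have "x (j+1) \<in> Z" using Gt0 by (simp add: Z_def K_def)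
    then have "t0 \<le> x (j+1)" using t0min by blast
    then show False using t0j1 by simp
  next
    case 3
    define s where "s = (x (j+1) + t0) / 2"
    have s1: "x (j+1) \<le> s" "s \<le> x j" "s \<noteq> t0" using t0j t0j1 by (auto simp: s_def)
    have "G s - G t0 = W * (s - t0)^2"
      using Gq[of s] Gq[of t0] s1 t0j t0j1 MW by (simp add: power2_eq_square algebra_simps)
    moreover have "W * (s - t0)^2 < 0" using 3 s1 by (simp add: mult_neg_pos)
    ultimately show False using Gge[of s] Gt0 by simp
  qed
qed



lemma mono_lemma:
  fixes H D :: "real \<Rightarrow> real"
  assumes uv: "u < v" and sub: "a \<le> u" "v \<le> b"
    and dH: "\<And>t. t \<in> {u..v} \<Longrightarrow> (H has_real_derivative D t) (at t within {a..b})"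
    and Dn: "\<And>t. t \<in> {u..v} \<Longrightarrow> D t \<le> 0"
  shows "H v \<le> H u"
proof -
  have "continuous_on {u..v} H"
    by (rule DERIV_continuous_on, rule DERIV_subset[OF dH]) (use sub in auto)
  moreover have "(H has_derivative (\<lambda>h. D t * h)) (at t)" if "u < t" "t < v" for t
  proof -
    have "(H has_real_derivative D t) (at t within {a..b})" using dH that by auto
    moreover have "at t within {a..b} = at t" using that sub by (intro at_within_Icc_at) auto
    ultimately show ?thesis by (simp add: has_field_derivative_def)
  qed
  ultimately obtain \<xi> where "u < \<xi>" "\<xi> < v" "H v - H u = D \<xi> * (v - u)"
    using mvt[OF uv, of H "\<lambda>t h. D t * h"] by blast
  moreover have "D \<xi> * (v - u) \<le> 0" using Dn[of \<xi>] \<open>u < \<xi>\<close> \<open>\<xi> < v\<close> uv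
    by (simp add: mult_nonpos_nonneg)
  ultimately show ?thesis by simp
qed

lemma lemB:
  fixes x w :: "nat \<Rightarrow> real" and n :: nat and f :: "real \<Rightarrow> real"
  assumes decr: "\<And>i j. 1 \<le> i \<Longrightarrow> i < j \<Longrightarrow> j \<le> n \<Longrightarrow> x j < x i"
    and range: "\<And>i. 1 \<le> i \<Longrightarrow> i \<le> n \<Longrightarrow> x i \<in> {a..b}"
    and W0: "(\<Sum>i=1..n. w i) = 0"
    and M0: "(\<Sum>i=1..n. w i * x i) = 0"
    and Q0: "(\<Sum>i=1..n. w i * (x i)^2) = 0"
    and Gnn: "\<And>t. (\<Sum>i=1..n. w i * (max (x i - t) 0)^2) \<ge> 0"
    and thr: "thrice_diff_nonneg3 a b f"
  shows "(\<Sum>i=1..n. w i * f (x i)) \<ge> 0"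
proof -
  obtain f1 f2 f3 where
    d1: "\<And>t. t \<in> {a..b} \<Longrightarrow> (f has_real_derivative f1 t) (at t within {a..b})" and
    d2: "\<And>t. t \<in> {a..b} \<Longrightarrow> (f1 has_real_derivative f2 t) (at t within {a..b})" and
    d3: "\<And>t. t \<in> {a..b} \<Longrightarrow> (f2 has_real_derivative f3 t) (at t within {a..b})" and
    nn: "\<And>t. t \<in> {a..b} \<Longrightarrow> f3 t \<ge> 0"
    using thr unfolding thrice_diff_nonneg3_def by blast
  define H where "H j t = (\<Sum>i=1..j. w i * (f (x i) - f t - f1 t * (x i - t) - f2 t * (x i - t)^2 / 2))" for j t
  have dH: "((H j) has_real_derivative (\<Sum>i=1..j. w i * (-(f3 t) * (x i - t)^2 / 2))) (at t within {a..b})"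
    if "t \<in> {a..b}" for j t
    unfolding H_def[abs_def]
  proof (intro DERIV_sum)
    fix i
    show "((\<lambda>t. w i * (f (x i) - f t - f1 t * (x i - t) - f2 t * (x i - t)^2 / 2)) has_real_derivative
       (w i * (-(f3 t) * (x i - t)^2 / 2))) (at t within {a..b})"
      by (rule derivative_eq_intros d1 d2 d3 that refl | simp)+ (simp add: divide_simps; simp add: algebra_simps power2_eq_square)
  qed
  have Hclosed: "H j t = (\<Sum>i=1..j. w i * f (x i)) - f t * (\<Sum>i=1..j. w i)
      - f1 t * ((\<Sum>i=1..j. w i * x i) - t * (\<Sum>i=1..j. w i)) - f2 t / 2 * (\<Sum>i=1..j. w i * (x i - t)^2)" for j t
  proof -
    have "H j t = (\<Sum>i=1..j. w i * f (x i) - f t * w i - f1 t * (w i * x i - t * w i) - f2 t / 2 * (w i * (x i - t)^2))"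
      unfolding H_def by (intro sum.cong refl) (simp add: algebra_simps)
    then show ?thesis by (simp add: sum_subtractf sum_distrib_left right_diff_distrib)
  qed
  show ?thesis
  proof (cases "n = 0")
    case True then show ?thesis by simp
  next
    case False
    have Hn: "H n t = (\<Sum>i=1..n. w i * f (x i))" for t
      unfolding Hclosed sq_expand W0 M0 Q0 by simp
    have step: "H j (x (j+1)) \<ge> H j (x j)" if j: "1 \<le> j" "j < n" for j
    proof (rule mono_lemma[where H="H j" and u="x (j+1)" and v="x j" and a=a and b=b])
      show "x (j+1) < x j" using decr[of j "j+1"] j by simp
      show "a \<le> x (j+1)" using range[of "j+1"] j by simp
      show "x j \<le> b" using range[of j] j by simp
      fix t assume t: "t \<in> {x (j+1)..x j}"
      then have tab: "t \<in> {a..b}" using range[of "j+1"] range[of j] j by auto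
      show "(H j has_real_derivative (\<Sum>i=1..j. w i * (-(f3 t) * (x i - t)^2 / 2))) (at t within {a..b})"
        by (rule dH[OF tab])
      have hi: "x j \<le> x i" if "1 \<le> i" "i \<le> j" for i using decr[of i j] that j by (cases "i = j") auto
      have lo: "x i \<le> x (j+1)" if "j < i" "i \<le> n" for i using decr[of "j+1" i] that by (cases "i = j+1") auto
      have "(\<Sum>i=1..n. w i * (max (x i - t) 0)^2) = (\<Sum>i=1..j. w i * (x i - t)^2)"
      proof (rule sum_split_j)
        show "j \<le> n" using j by simp
        fix i assume "1 \<le> i" "i \<le> j"
        then have "t \<le> x i" using hi[of i] t by auto
        then show "w i * (max (x i - t) 0)^2 = w i * (x i - t)^2" by simp
      next
        fix i assume "j < i" "i \<le> n"
        then have "x i \<le> t" using lo[of i] t by auto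
        then show "w i * (max (x i - t) 0)^2 = 0" by simp
      qed
      then have G: "(\<Sum>i=1..j. w i * (x i - t)^2) \<ge> 0" using Gnn[of t] by simp
      have "(\<Sum>i=1..j. w i * (-(f3 t) * (x i - t)^2 / 2)) = -(f3 t / 2) * (\<Sum>i=1..j. w i * (x i - t)^2)"
        by (simp add: sum_distrib_left algebra_simps)
      also have "\<dots> \<le> 0" using G nn[OF tab] by simp
      finally show "(\<Sum>i=1..j. w i * (-(f3 t) * (x i - t)^2 / 2)) \<le> 0" .
    qed
    have Hsuc: "H (Suc j) (x (Suc j)) = H j (x (Suc j))" for j
      unfolding H_def by simp
    have "1 \<le> j \<longrightarrow> j \<le> n \<longrightarrow> H j (x j) \<ge> 0" for j
    proof (induction j)
      case 0 then show ?case by simp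
    next
      case (Suc j)
      show ?case
      proof (cases "j = 0")
        case True then show ?thesis by (simp add: H_def)
      next
        case False
        then show ?thesis using Suc.IH step[of j] Hsuc[of j] by auto
      qed
    qed
    then have "H n (x n) \<ge> 0" using False by simp
    then show ?thesis using Hn by simp
  qed
qed
theorem mainTheorem3:
  fixes a b :: real and n :: nat and x w :: "nat \<Rightarrow> real"
  assumes decr: "\<And>i j. 1 \<le> i \<Longrightarrow> i < j \<Longrightarrow> j \<le> n \<Longrightarrow> x j < x i"
    and range: "\<And>i. 1 \<le> i \<Longrightarrow> i \<le> n \<Longrightarrow> x i \<in> {a..b}"
    and W0: "(\<Sum>i=1..n. w i) = 0"
    and M0: "(\<Sum>i=1..n. w i * x i) = 0"
    and Q0: "(\<Sum>i=1..n. w i * (x i)^2) = 0"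
  shows "(\<forall>f. thrice_diff_nonneg3 a b f \<longrightarrow> (\<Sum>i=1..n. w i * f (x i)) \<ge> 0) \<longleftrightarrow>
         (\<forall>j\<in>{1..n-1}.
            (\<Sum>i=1..j. w i) * x j \<ge> (\<Sum>i=1..j. w i * x i) \<and>
            (\<Sum>i=1..j. w i * x i) \<ge> (\<Sum>i=1..j. w i) * x (j+1) \<longrightarrow>
            (\<Sum>i=1..j. w i) * (\<Sum>i=1..j. w i * (x i)^2) \<ge> (\<Sum>i=1..j. w i * x i)^2)"
proof
  assume H: "\<forall>f. thrice_diff_nonneg3 a b f \<longrightarrow> (\<Sum>i=1..n. w i * f (x i)) \<ge> 0"
  show "\<forall>j\<in>{1..n-1}.
            (\<Sum>i=1..j. w i) * x j \<ge> (\<Sum>i=1..j. w i * x i) \<and>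
            (\<Sum>i=1..j. w i * x i) \<ge> (\<Sum>i=1..j. w i) * x (j+1) \<longrightarrow>
            (\<Sum>i=1..j. w i) * (\<Sum>i=1..j. w i * (x i)^2) \<ge> (\<Sum>i=1..j. w i * x i)^2"
  proof (intro ballI impI)
    fix j assume j: "j \<in> {1..n-1}" and c: "(\<Sum>i=1..j. w i) * x j \<ge> (\<Sum>i=1..j. w i * x i) \<and>
            (\<Sum>i=1..j. w i * x i) \<ge> (\<Sum>i=1..j. w i) * x (j+1)"
    show "(\<Sum>i=1..j. w i) * (\<Sum>i=1..j. w i * (x i)^2) \<ge> (\<Sum>i=1..j. w i * x i)^2"
    proof (rule ccontr)
      assume "\<not> ?thesis"
      then have bad: "(\<Sum>i=1..j. w i) * (\<Sum>i=1..j. w i * (x i)^2) < (\<Sum>i=1..j. w i * x i)^2" by simp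
      have j1: "1 \<le> j" "j < n" using j by auto
      obtain f where "thrice_diff_nonneg3 a b f" "(\<Sum>i=1..n. w i * f (x i)) < 0"
        using lemC[OF decr j1 conjunct1[OF c] conjunct2[OF c] bad] by blast
      then show False using H by force
    qed
  qed
next
  assume C: "\<forall>j\<in>{1..n-1}.
            (\<Sum>i=1..j. w i) * x j \<ge> (\<Sum>i=1..j. w i * x i) \<and>
            (\<Sum>i=1..j. w i * x i) \<ge> (\<Sum>i=1..j. w i) * x (j+1) \<longrightarrow>
            (\<Sum>i=1..j. w i) * (\<Sum>i=1..j. w i * (x i)^2) \<ge> (\<Sum>i=1..j. w i * x i)^2"
  have Gnn: "\<And>t. (\<Sum>i=1..n. w i * (max (x i - t) 0)^2) \<ge> 0"
    using lemA[OF decr W0 M0 Q0 C] by blast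
  show "\<forall>f. thrice_diff_nonneg3 a b f \<longrightarrow> (\<Sum>i=1..n. w i * f (x i)) \<ge> 0"
    using lemB[OF decr range W0 M0 Q0 Gnn] by blast
qed

end
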